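(* Let $f\in\mathbb{Q}[x_1,\dots,x_n]$ be a convex polynomial and $P=\{x\in\mathbb{R}^n:Ax\le b\}$ a nonempty polyhedron ($A\in\mathbb{Q}^{m\times n}$, $b\in\mathbb{Q}^m$). Suppose $\mathcal{U}\subseteq\mathbb{R}^n$ is a linear subspace, $U\in\mathbb{Q}^{k\times n}$ has pairwise orthogonal rows spanning $\mathcal{U}$, $w\in\mathcal{U}^\perp$ is a rational vector, and $q\in\mathbb{Q}[y_1,\dots,y_k]$ is a strongly convex quadratic polynomial, such that $f(x)=f(x_{\mathcal{U}})-\langle w,x\rangle$ and $f(x_{\mathcal{U}})\ge q(Ux)$ for all $x\in\mathbb{R}^n$. Then $f$ is unbounded from below on $P$ if and only if there exists $x^0\in\mathbb{R}^n$ with $Ax^0\le0$, $Ux^0=0$ (equivalently $x^0\in\mathcal{U}^\perp$) and $\langle w,x^0\rangle=1$.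
   Context: $x_{\mathcal{U}}$ denotes the orthogonal projection of $x$ onto $\mathcal{U}$. A quadratic $q$ is strongly convex if its (constant) Hessian is positive definite. Such $\mathcal{U},U,w,q$ always exist for convex rational $f$. *)

theory Defs
  imports "HOL-Analysis.Analysis"
begin

definition rat_poly_fun :: "(real^'n \<Rightarrow> real) \<Rightarrow> bool" where
  "rat_poly_fun f \<longleftrightarrow>
     (\<exists>c :: ('n \<Rightarrow> nat) \<Rightarrow> real.
        finite {\<alpha>. c \<alpha> \<noteq> 0} \<and> (\<forall>\<alpha>. c \<alpha> \<in> \<rat>) \<and>
        (\<forall>x. f x = (\<Sum>\<alpha>\<in>{\<alpha>. c \<alpha> \<noteq> 0}. c \<alpha> * (\<Prod>i\<in>UNIV. (x $ i) ^ (\<alpha> i)))))"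

text \<open>Strongly convex quadratic polynomial with rational coefficients:
  q y = y^T Q y + c.y + d, Q symmetric rational; its (constant) Hessian 2Q is positive definite.\<close>
definition strongly_convex_rat_quadratic :: "(real^'k \<Rightarrow> real) \<Rightarrow> bool" where
  "strongly_convex_rat_quadratic q \<longleftrightarrow>
     (\<exists>(Q :: real^'k^'k) (c :: real^'k) (d :: real).
        (\<forall>i j. Q $ i $ j \<in> \<rat>) \<and> (\<forall>i. c $ i \<in> \<rat>) \<and> d \<in> \<rat> \<and>
        transpose Q = Q \<and>
        (\<forall>y. y \<noteq> 0 \<longrightarrow> y \<bullet> ((2 *\<^sub>R Q) *v y) > 0) \<and>
        (\<forall>y. q y = y \<bullet> (Q *v y) + c \<bullet> y + d))"

definition orth_proj :: "(real^'n) set \<Rightarrow> real^'n \<Rightarrow> real^'n" where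
  "orth_proj S x = (THE y. y \<in> S \<and> (\<forall>u\<in>S. orthogonal (x - y) u))"

end

theory Submission
  imports Defs
begin

lemma row_eq: "row i A = A $ i"
  by (simp add: row_def vec_eq_iff)

lemma orth_proj_eq:
  fixes S :: "(real^'n) set"
  assumes "subspace S" "y \<in> S" "\<forall>u\<in>S. orthogonal (x - y) u"
  shows "orth_proj S x = y"
  unfolding orth_proj_def
proof (rule the_equality)
  show "y \<in> S \<and> (\<forall>u\<in>S. orthogonal (x - y) u)" using assms by auto
next
  fix y' assume h: "y' \<in> S \<and> (\<forall>u\<in>S. orthogonal (x - y') u)"
  have d: "y' - y \<in> S" using h assms subspace_diff by blast
  have "orthogonal (x - y) (y' - y)" "orthogonal (x - y') (y' - y)" using d h assms by auto
  then have "(y' - y) \<bullet> (y' - y) = 0"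
    unfolding orthogonal_def by (simp add: algebra_simps)
  then show "y' = y" by simp
qed

lemma orth_proj_exists:
  fixes S :: "(real^'n) set"
  assumes "subspace S"
  shows "\<exists>y. y \<in> S \<and> (\<forall>u\<in>S. orthogonal (x - y) u)"
proof -
  obtain y z where "y \<in> span S" "\<And>w. w \<in> span S \<Longrightarrow> orthogonal z w" "x = y + z"
    using orthogonal_subspace_decomp_exists by blast
  then show ?thesis using assms span_eq_iff by (metis add_diff_cancel_left')
qed

lemma quad_bounded:
  fixes q :: "real^'k \<Rightarrow> real"
  assumes "strongly_convex_rat_quadratic q"
  shows "\<exists>m. \<forall>y. m \<le> q y - \<mu> \<bullet> y"
proof -
  obtain Q c d where Qpos: "\<forall>y. y \<noteq> 0 \<longrightarrow> y \<bullet> ((2 *\<^sub>R Q) *v y) > 0"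
    and qd: "\<forall>y. q y = y \<bullet> (Q *v y) + c \<bullet> y + d"
    using assms unfolding strongly_convex_rat_quadratic_def by blast
  have pos: "y \<bullet> (Q *v y) > 0" if "y \<noteq> 0" for y
  proof -
    have "(2 *\<^sub>R Q) *v y = 2 *\<^sub>R (Q *v y)"
      by (simp add: scaleR_matrix_vector_assoc)
    then show ?thesis using Qpos that by auto
  qed
  let ?h = "\<lambda>y::real^'k. y \<bullet> (Q *v y)"
  have cont: "continuous_on (sphere 0 1) ?h"
    by (intro continuous_intros continuous_on_compose2[OF matrix_vector_mult_linear_continuous_on]) auto
  have ne: "sphere (0::real^'k) 1 \<noteq> {}"
    by (metis empty_iff norm_sgn sgn_zero_iff zero_neq_one mem_sphere_0 vector_choose_size zero_le_one)
  obtain y0 where y0: "y0 \<in> sphere 0 1" "\<forall>y\<in>sphere 0 1. ?h y0 \<le> ?h y"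
    using continuous_attains_inf[OF compact_sphere ne cont] by blast
  define e where "e = ?h y0"
  have "y0 \<noteq> 0" using y0(1) by auto
  then have epos: "e > 0" unfolding e_def using pos by blast
  have hom: "?h y \<ge> e * (norm y)^2" for y
  proof (cases "y = 0")
    case True then show ?thesis by simp
  next
    case False
    let ?u = "(1 / norm y) *\<^sub>R y"
    have "?u \<in> sphere 0 1" using False by simp
    then have "e \<le> ?h ?u" using y0(2) unfolding e_def by blast
    also have "?h ?u = (1 / norm y)^2 * ?h y"
      by (simp add: matrix_vector_mult_scaleR power2_eq_square)
    finally have "e * (norm y)^2 \<le> (1 / norm y)^2 * ?h y * (norm y)^2"
      by (simp add: mult_right_mono)
    also have "\<dots> = ?h y" using False by (simp add: power2_eq_square field_simps)
    finally show ?thesis .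
  qed
  define a where "a = norm (c - \<mu>)"
  have "d - a^2 / (4 * e) \<le> q y - \<mu> \<bullet> y" for y
  proof -
    have cs: "(c - \<mu>) \<bullet> y \<ge> - (a * norm y)"
    proof -
      have "(\<mu> - c) \<bullet> y = - ((c - \<mu>) \<bullet> y)" by (simp add: inner_diff_left)
      then show ?thesis unfolding a_def
        using norm_cauchy_schwarz[of "\<mu> - c" y] norm_minus_commute[of c \<mu>]
        by (metis minus_le_iff)
    qed
    have sq: "0 \<le> (2 * e * norm y - a)^2" by simp
    have "d - a^2 / (4 * e) \<le> e * (norm y)^2 - a * norm y + d"
    proof -
      have "a^2 / (4 * e) = (a^2) / (4*e)" by simp
      have "4 * e * (e * (norm y)^2 - a * norm y) + a^2 \<ge> 0"
        using sq by (simp add: power2_eq_square algebra_simps)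
      then have "- (a^2) \<le> 4 * e * (e * (norm y)^2 - a * norm y)" by linarith
      then have "- (a^2) \<le> (e * (norm y)^2 - a * norm y) * (4 * e)"
        by (metis mult.commute)
      then have "- (a^2) / (4 * e) \<le> e * (norm y)^2 - a * norm y"
        using epos pos_divide_le_eq[of "4 * e" "- (a^2)" "e * (norm y)^2 - a * norm y"] by simp
      then show ?thesis by simp
    qed
    also have "\<dots> \<le> q y - \<mu> \<bullet> y"
      using hom[of y] cs qd by (simp add: inner_diff_left)
    finally show ?thesis .
  qed
  then show ?thesis by blast
qed

theorem lemma5p1:
  fixes f :: "real^'n \<Rightarrow> real"
    and A :: "real^'n^'m" and b :: "real^'m"
    and \<U> :: "(real^'n) set" and U :: "real^'n^'k" and w :: "real^'n"
    and q :: "real^'k \<Rightarrow> real"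
  assumes f_poly: "rat_poly_fun f"
    and f_convex: "convex_on UNIV f"
    and A_rat: "\<forall>i j. A $ i $ j \<in> \<rat>"
    and b_rat: "\<forall>i. b $ i \<in> \<rat>"
    and P_nonempty: "{x. \<forall>i. (A *v x) $ i \<le> b $ i} \<noteq> {}"
    and U_subspace: "subspace \<U>"
    and U_rat: "\<forall>i j. U $ i $ j \<in> \<rat>"
    and U_orth: "\<forall>i j. i \<noteq> j \<longrightarrow> orthogonal (row i U) (row j U)"
    and U_span: "span (rows U) = \<U>"
    and w_perp: "\<forall>u\<in>\<U>. orthogonal w u"
    and w_rat: "\<forall>i. w $ i \<in> \<rat>"
    and q_quad: "strongly_convex_rat_quadratic q"
    and f_decomp: "\<forall>x. f x = f (orth_proj \<U> x) - w \<bullet> x"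
    and f_lower: "\<forall>x. f (orth_proj \<U> x) \<ge> q (U *v x)"
  shows "(\<not> (\<exists>B. \<forall>x\<in>{x. \<forall>i. (A *v x) $ i \<le> b $ i}. B \<le> f x)) \<longleftrightarrow>
         (\<exists>x0. (\<forall>i. (A *v x0) $ i \<le> 0) \<and> U *v x0 = 0 \<and> w \<bullet> x0 = 1)"
proof
  let ?P = "{x. \<forall>i. (A *v x) $ i \<le> b $ i}"
  assume unb: "\<not> (\<exists>B. \<forall>x\<in>?P. B \<le> f x)"
  show "\<exists>x0. (\<forall>i. (A *v x0) $ i \<le> 0) \<and> U *v x0 = 0 \<and> w \<bullet> x0 = 1"
  proof (rule ccontr)
    assume nox: "\<not> ?thesis"
    define S where "S = range (\<lambda>i. A $ i) \<union> range (\<lambda>j. U $ j) \<union> range (\<lambda>j. - (U $ j))"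
    have finS: "finite S" unfolding S_def by simp
    define K where "K = convex_cone hull S"
    define D where "D = {v. \<exists>\<mu> C. \<forall>x\<in>?P. v \<bullet> x \<le> C + \<mu> \<bullet> (U *v x)}"
    have "convex_cone D"
      unfolding convex_cone_iff
    proof (intro conjI ballI allI impI)
      show "0 \<in> D" unfolding D_def by (rule CollectI, rule exI[of _ 0], rule exI[of _ 0]) simp
    next
      fix x y assume "x \<in> D" "y \<in> D"
      then obtain m1 C1 m2 C2 where "\<forall>z\<in>?P. x \<bullet> z \<le> C1 + m1 \<bullet> (U *v z)"
        "\<forall>z\<in>?P. y \<bullet> z \<le> C2 + m2 \<bullet> (U *v z)" unfolding D_def by blast
      then have "\<forall>z\<in>?P. (x + y) \<bullet> z \<le> (C1 + C2) + (m1 + m2) \<bullet> (U *v z)"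
        by (auto simp: inner_add_left) (smt (verit))
      then show "x + y \<in> D" unfolding D_def by blast
    next
      fix x and c :: real assume "x \<in> D" "0 \<le> c"
      then obtain m1 C1 where h: "\<forall>z\<in>?P. x \<bullet> z \<le> C1 + m1 \<bullet> (U *v z)" unfolding D_def by blast
      have "\<forall>z\<in>?P. (c *\<^sub>R x) \<bullet> z \<le> c * C1 + (c *\<^sub>R m1) \<bullet> (U *v z)"
      proof
        fix z assume "z \<in> ?P"
        then have "c * (x \<bullet> z) \<le> c * (C1 + m1 \<bullet> (U *v z))" using h \<open>0 \<le> c\<close> mult_left_mono by blast
        then show "(c *\<^sub>R x) \<bullet> z \<le> c * C1 + (c *\<^sub>R m1) \<bullet> (U *v z)" by (simp add: algebra_simps)
      qed
      then show "c *\<^sub>R x \<in> D" unfolding D_def by blast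
    qed
    moreover have "S \<subseteq> D"
    proof
      fix v assume "v \<in> S"
      then consider i where "v = A $ i" | j where "v = U $ j" | j where "v = - (U $ j)"
        unfolding S_def by blast
      then show "v \<in> D"
      proof cases
        case 1
        have "\<forall>x\<in>?P. v \<bullet> x \<le> b $ i + 0 \<bullet> (U *v x)"
          using 1 by (auto simp: matrix_vector_mul_component)
        then show ?thesis unfolding D_def by blast
      next
        case 2
        have "\<forall>x\<in>?P. v \<bullet> x \<le> 0 + axis j 1 \<bullet> (U *v x)"
          using 2 by (auto simp: matrix_vector_mul_component inner_axis')
        then show ?thesis unfolding D_def by blast
      next
        case 3
        have "\<forall>x\<in>?P. v \<bullet> x \<le> 0 + (- axis j 1) \<bullet> (U *v x)"
          using 3 by (auto simp: matrix_vector_mul_component inner_axis')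
        then show ?thesis unfolding D_def by blast
      qed
    qed
    ultimately have KD: "K \<subseteq> D" unfolding K_def by (simp add: hull_minimal)
    have "w \<in> K"
    proof (rule ccontr)
      assume "w \<notin> K"
      then obtain a \<beta> where ab: "a \<bullet> w < \<beta>" "\<forall>x\<in>K. \<beta> < a \<bullet> x"
        using separating_hyperplane_closed_point[of K w] closed_convex_cone_hull[OF finS]
          convex_convex_cone_hull unfolding K_def by blast
      have "\<beta> < 0" using ab convex_cone_hull_contains_0 unfolding K_def by fastforce
      have nn: "a \<bullet> k \<ge> 0" if "k \<in> K" for k
      proof (rule ccontr)
        assume "\<not> a \<bullet> k \<ge> 0"
        then have neg: "a \<bullet> k < 0" by simp
        define t where "t = \<beta> / (a \<bullet> k)"
        have "t > 0" unfolding t_def using neg \<open>\<beta> < 0\<close> by (simp add: divide_neg_neg)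
        have cc: "convex_cone K" unfolding K_def by (rule convex_cone_convex_cone_hull)
        have "t *\<^sub>R k \<in> K" using that \<open>t > 0\<close> cc
          unfolding convex_cone_iff by auto
        then have "\<beta> < t * (a \<bullet> k)" using ab by auto
        moreover have "t * (a \<bullet> k) = \<beta>" unfolding t_def using neg by simp
        ultimately show False by simp
      qed
      have SK: "S \<subseteq> K" unfolding K_def by (rule hull_subset)
      define x0 where "x0 = (1 / (- (a \<bullet> w))) *\<^sub>R (- a)"
      have awneg: "a \<bullet> w < 0" using ab \<open>\<beta> < 0\<close> by simp
      have "(\<forall>i. (A *v x0) $ i \<le> 0) \<and> U *v x0 = 0 \<and> w \<bullet> x0 = 1"
      proof (intro conjI allI)
        fix i
        have "a \<bullet> A $ i \<ge> 0" using nn SK unfolding S_def by auto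
        then show "(A *v x0) $ i \<le> 0" using awneg
          by (simp add: x0_def matrix_vector_mul_component inner_commute divide_nonneg_neg)
      next
        have "a \<bullet> U $ j = 0" for j
        proof -
          have "U $ j \<in> K" "- (U $ j) \<in> K" using SK unfolding S_def by auto
          then have "a \<bullet> U $ j \<ge> 0" "a \<bullet> (- U $ j) \<ge> 0" using nn by blast+
          then show ?thesis by simp
        qed
        then show "U *v x0 = 0"
          by (simp add: vec_eq_iff x0_def matrix_vector_mul_component inner_commute)
      next
        show "w \<bullet> x0 = 1" using awneg by (simp add: x0_def inner_commute)
      qed
      then show False using nox by blast
    qed
    then obtain \<mu> C where wb: "\<forall>x\<in>?P. w \<bullet> x \<le> C + \<mu> \<bullet> (U *v x)" using KD unfolding D_def by blast
    obtain m where m: "\<forall>y. m \<le> q y - \<mu> \<bullet> y" using quad_bounded[OF q_quad] by blast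
    have "\<forall>x\<in>?P. m - C \<le> f x"
    proof
      fix x assume "x \<in> ?P"
      then have "w \<bullet> x \<le> C + \<mu> \<bullet> (U *v x)" using wb by blast
      moreover have "f x \<ge> q (U *v x) - w \<bullet> x" using f_decomp[rule_format, of x] f_lower[rule_format, of x] by linarith
      moreover have "m \<le> q (U *v x) - \<mu> \<bullet> (U *v x)" using m by blast
      ultimately show "m - C \<le> f x" by linarith
    qed
    then show False using unb by blast
  qed
next
  let ?P = "{x. \<forall>i. (A *v x) $ i \<le> b $ i}"
  assume "\<exists>x0. (\<forall>i. (A *v x0) $ i \<le> 0) \<and> U *v x0 = 0 \<and> w \<bullet> x0 = 1"
  then obtain x0 where x0: "\<forall>i. (A *v x0) $ i \<le> 0" "U *v x0 = 0" "w \<bullet> x0 = 1" by blast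
  obtain p where p: "p \<in> ?P" using P_nonempty by blast
  obtain y where y: "y \<in> \<U>" "\<forall>u\<in>\<U>. orthogonal (p - y) u" using orth_proj_exists[OF U_subspace] by blast
  have x0orth: "orthogonal x0 u" if "u \<in> \<U>" for u
  proof -
    have "orthogonal x0 r" if "r \<in> rows U" for r
    proof -
      obtain j where "r = U $ j" using \<open>r \<in> rows U\<close> unfolding rows_def row_eq by blast
      have "(U *v x0) $ j = 0" using x0 by simp
      then show ?thesis using \<open>r = U $ j\<close> by (simp add: orthogonal_def matrix_vector_mul_component inner_commute)
    qed
    then show ?thesis using orthogonal_to_span[of u "rows U" x0] that U_span by blast
  qed
  show "\<not> (\<exists>B. \<forall>x\<in>?P. B \<le> f x)"
  proof
    assume "\<exists>B. \<forall>x\<in>?P. B \<le> f x"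
    then obtain B where B: "\<forall>x\<in>?P. B \<le> f x" by blast
    define t where "t = max 0 (f y - w \<bullet> p - B + 1)"
    have t0: "t \<ge> 0" unfolding t_def by simp
    let ?x = "p + t *\<^sub>R x0"
    have inP: "?x \<in> ?P"
    proof (intro CollectI allI)
      fix i
      have "(A *v ?x) $ i = (A *v p) $ i + t * (A *v x0) $ i"
        by (simp add: matrix_vector_right_distrib matrix_vector_mult_scaleR)
      moreover have "t * (A *v x0) $ i \<le> 0" using t0 x0(1) by (simp add: mult_nonneg_nonpos)
      moreover have "(A *v p) $ i \<le> b $ i" using p by simp
      ultimately show "(A *v ?x) $ i \<le> b $ i" by linarith
    qed
    have "orth_proj \<U> ?x = y"
    proof (rule orth_proj_eq[OF U_subspace y(1)], intro ballI)
      fix u assume "u \<in> \<U>"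
      have "?x - y = (p - y) + t *\<^sub>R x0" by simp
      then have "(?x - y) \<bullet> u = (p - y) \<bullet> u + t * (x0 \<bullet> u)"
        by (metis inner_add_left inner_scaleR_left)
      moreover have "(p - y) \<bullet> u = 0" "x0 \<bullet> u = 0"
        using y(2) x0orth \<open>u \<in> \<U>\<close> unfolding orthogonal_def by auto
      ultimately show "orthogonal (?x - y) u"
        unfolding orthogonal_def by simp
    qed
    then have "f ?x = f y - w \<bullet> p - t"
    proof -
      have "f ?x = f (orth_proj \<U> ?x) - w \<bullet> ?x" using f_decomp by blast
      moreover have "w \<bullet> ?x = w \<bullet> p + t" using x0(3) by (simp add: inner_add_right)
      ultimately show ?thesis using \<open>orth_proj \<U> ?x = y\<close> by simp
    qed
    moreover have "B \<le> f ?x" using B inP by blast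
    ultimately show False unfolding t_def by linarith
  qed
qed

end
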